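(* Let $G$ be a second countable locally compact abelian group, $\varLambda\subseteq G$ a set of finite local complexity, and $\mathcal{A}=(A_n)_n$ a van Hove sequence. Let $F_n=\varLambda\cap A_n$ and assume (a) $\lim_{n\to\infty}\mathrm{card}(F_n)=\infty$, and (b) for all $0\ne t\in\varLambda-\varLambda$, $\mathrm{card}(\varLambda\cap(-t+\varLambda))<\infty$. Then the counting autocorrelation of $\varLambda$ exists with respect to $\mathcal{A}$ and $\gamma_{\mathrm{count}}=\delta_0$.
   Context: Finite local complexity: $\varLambda-\varLambda$ is locally finite (every compact set meets it in finitely many points). A van Hove sequence is a sequence of compact sets $A_n$ of positive Haar measure with $\mathrm{vol}(\partial^K A_n)/\mathrm{vol}(A_n)\to0$ for all compact $K$, where $\partial^K A=((A+K)\setminus A^\circ)\cup((\overline{G\setminus A}-K)\cap A)$. For finite $F$, $\gamma_F=\frac{1}{\mathrm{card}(F)}\sum_{x,y\in F}\delta_{x-y}$ if $F\ne\emptyset$, $\gamma_\emptyset=0$; the counting autocorrelation is the vague limit of $\gamma_{F_n}$. *)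

theory Defs
  imports "HOL-Analysis.Analysis"
begin

text \<open>Haar measure on a locally compact abelian group (the library has none):
  a translation-invariant Borel measure, finite on compact sets and positive on
  nonempty open sets.  (In a second countable locally compact Hausdorff space such
  a locally finite Borel measure is automatically regular.)\<close>
definition haar_measure :: "'a::topological_ab_group_add measure \<Rightarrow> bool" where
  "haar_measure \<mu> \<longleftrightarrow>
     sets \<mu> = sets borel \<and>
     (\<forall>A\<in>sets borel. \<forall>x. emeasure \<mu> ((\<lambda>a. x + a) ` A) = emeasure \<mu> A) \<and>
     (\<forall>K. compact K \<longrightarrow> emeasure \<mu> K < \<infinity>) \<and>
     (\<forall>U. open U \<and> U \<noteq> {} \<longrightarrow> emeasure \<mu> U > 0)"

definition set_plus :: "'a::ab_group_add set \<Rightarrow> 'a set \<Rightarrow> 'a set" where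
  "set_plus A B = {a + b | a b. a \<in> A \<and> b \<in> B}"

definition set_minus :: "'a::ab_group_add set \<Rightarrow> 'a set \<Rightarrow> 'a set" where
  "set_minus A B = {a - b | a b. a \<in> A \<and> b \<in> B}"

definition vh_boundary :: "'a::topological_ab_group_add set \<Rightarrow> 'a set \<Rightarrow> 'a set" where
  "vh_boundary K A =
     ((set_plus A K - interior A) \<union> (set_minus (closure (UNIV - A)) K \<inter> A))"

definition van_Hove :: "'a::topological_ab_group_add measure \<Rightarrow> (nat \<Rightarrow> 'a set) \<Rightarrow> bool" where
  "van_Hove \<mu> A \<longleftrightarrow>
     (\<forall>n. compact (A n) \<and> emeasure \<mu> (A n) > 0) \<and>
     (\<forall>K. compact K \<longrightarrow>
        (\<lambda>n. measure \<mu> (vh_boundary K (A n)) / measure \<mu> (A n)) \<longlonglongrightarrow> 0)"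

definition finite_local_complexity :: "'a::topological_ab_group_add set \<Rightarrow> bool" where
  "finite_local_complexity \<Lambda> \<longleftrightarrow>
     (\<forall>K. compact K \<longrightarrow> finite (K \<inter> set_minus \<Lambda> \<Lambda>))"

definition Cc :: "('a::topological_space \<Rightarrow> complex) set" where
  "Cc = {f. continuous_on UNIV f \<and> compact (closure {x. f x \<noteq> 0})}"

text \<open>Radon measures are represented as linear functionals on C_c(G).
  gamma_F for a finite set F, and the Dirac measure at 0.\<close>
definition gamma_fin :: "'a::ab_group_add set \<Rightarrow> ('a \<Rightarrow> complex) \<Rightarrow> complex" where
  "gamma_fin F f = (if F = {} then 0
      else (1 / of_nat (card F)) * (\<Sum>x\<in>F. \<Sum>y\<in>F. f (x - y)))"

definition dirac0 :: "('a::zero \<Rightarrow> complex) \<Rightarrow> complex" where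
  "dirac0 f = f 0"

definition vague_lim ::
  "(nat \<Rightarrow> ('a::topological_space \<Rightarrow> complex) \<Rightarrow> complex) \<Rightarrow> (('a \<Rightarrow> complex) \<Rightarrow> complex) \<Rightarrow> bool" where
  "vague_lim \<gamma>s \<gamma> \<longleftrightarrow> (\<forall>f\<in>Cc. (\<lambda>n. \<gamma>s n f) \<longlonglongrightarrow> \<gamma> f)"

definition counting_autocorrelation ::
  "'a::topological_ab_group_add set \<Rightarrow> (nat \<Rightarrow> 'a set) \<Rightarrow> (('a \<Rightarrow> complex) \<Rightarrow> complex) \<Rightarrow> bool" where
  "counting_autocorrelation \<Lambda> A \<gamma> \<longleftrightarrow> vague_lim (\<lambda>n. gamma_fin (\<Lambda> \<inter> A n)) \<gamma>"

end

theory Submission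
  imports Defs
begin

lemma core_bound:
  fixes \<Lambda> F :: "'a::ab_group_add set" and f :: "'a \<Rightarrow> complex" and T :: "'a set"
  assumes FL: "F \<subseteq> \<Lambda>" and fF: "finite F" and fT: "finite T"
    and TT: "\<And>x y. x \<in> \<Lambda> \<Longrightarrow> y \<in> \<Lambda> \<Longrightarrow> x \<noteq> y \<Longrightarrow> f (x - y) \<noteq> 0 \<Longrightarrow> x - y \<in> T"
    and fin: "\<And>t. t \<in> T \<Longrightarrow> finite (\<Lambda> \<inter> (\<lambda>x. - t + x) ` \<Lambda>)"
  shows "norm ((\<Sum>x\<in>F. \<Sum>y\<in>F. f (x - y)) - of_nat (card F) * f 0)
     \<le> (\<Sum>t\<in>T. norm (f t) * real (card (\<Lambda> \<inter> (\<lambda>x. - t + x) ` \<Lambda>)))"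
proof -
  define g where "g = (\<lambda>p::'a\<times>'a. fst p - snd p)"
  define D where "D = (\<lambda>x. (x,x)) ` F"
  define Of where "Of = {p\<in>F\<times>F. fst p \<noteq> snd p}"
  define S where "S = {p\<in>F\<times>F. fst p \<noteq> snd p \<and> f (g p) \<noteq> 0}"
  have fFF: "finite (F\<times>F)" using fF by auto
  have 1: "(\<Sum>x\<in>F. \<Sum>y\<in>F. f (x - y)) = (\<Sum>p\<in>F\<times>F. f (g p))"
    unfolding g_def by (simp add: sum.cartesian_product case_prod_beta)
  have split: "F\<times>F = D \<union> Of" "D \<inter> Of = {}" unfolding D_def Of_def by auto
  have 2: "(\<Sum>p\<in>F\<times>F. f (g p)) = (\<Sum>p\<in>D. f (g p)) + (\<Sum>p\<in>Of. f (g p))"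
    using split fFF by (metis finite_Un sum.union_disjoint)
  have 3: "(\<Sum>p\<in>D. f (g p)) = of_nat (card F) * f 0"
    unfolding D_def g_def by (subst sum.reindex) (auto simp: inj_on_def)
  have 4: "(\<Sum>p\<in>Of. f (g p)) = (\<Sum>p\<in>S. f (g p))"
    by (rule sum.mono_neutral_right) (use fFF in \<open>auto simp: Of_def S_def\<close>)
  have fS: "finite S" using fFF unfolding S_def by (auto intro: finite_subset)
  have gS: "g ` S \<subseteq> T" unfolding S_def g_def using FL by (force intro: TT)
  have 5: "(\<Sum>p\<in>S. f (g p)) = (\<Sum>t\<in>T. \<Sum>p\<in>{p\<in>S. g p = t}. f (g p))"
    using sum.group[OF fS fT gS, of "\<lambda>p. f (g p)"] by simp
  have 6: "(\<Sum>p\<in>{p\<in>S. g p = t}. f (g p)) = of_nat (card {p\<in>S. g p = t}) * f t" for t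
    by simp
  have 7: "card {p\<in>S. g p = t} \<le> card (\<Lambda> \<inter> (\<lambda>x. - t + x) ` \<Lambda>)" if t: "t \<in> T" for t
  proof (rule card_inj_on_le[where f=snd])
    show "inj_on snd {p \<in> S. g p = t}" unfolding inj_on_def g_def by auto
    show "snd ` {p \<in> S. g p = t} \<subseteq> \<Lambda> \<inter> (\<lambda>x. - t + x) ` \<Lambda>"
    proof
      fix y assume "y \<in> snd ` {p \<in> S. g p = t}"
      then obtain x where xy: "(x,y) \<in> S" "x - y = t" unfolding g_def by force
      then have "x \<in> \<Lambda>" "y \<in> \<Lambda>" using FL unfolding S_def by auto
      moreover have "y = - t + x" using xy(2) by (simp add: algebra_simps)
      ultimately show "y \<in> \<Lambda> \<inter> (\<lambda>x. - t + x) ` \<Lambda>" by auto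
    qed
    show "finite (\<Lambda> \<inter> (\<lambda>x. - t + x) ` \<Lambda>)" using fin t .
  qed
  have "(\<Sum>x\<in>F. \<Sum>y\<in>F. f (x - y)) - of_nat (card F) * f 0
      = (\<Sum>t\<in>T. of_nat (card {p\<in>S. g p = t}) * f t)"
    using 1 2 3 4 5 6 by simp
  also have "norm \<dots> \<le> (\<Sum>t\<in>T. norm (of_nat (card {p\<in>S. g p = t}) * f t))"
    by (rule norm_sum)
  also have "\<dots> \<le> (\<Sum>t\<in>T. norm (f t) * real (card (\<Lambda> \<inter> (\<lambda>x. - t + x) ` \<Lambda>)))"
  proof (rule sum_mono)
    fix t assume t: "t \<in> T"
    have "norm (of_nat (card {p\<in>S. g p = t}) * f t) = real (card {p\<in>S. g p = t}) * norm (f t)"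
      by (simp add: norm_mult)
    also have "\<dots> \<le> real (card (\<Lambda> \<inter> (\<lambda>x. - t + x) ` \<Lambda>)) * norm (f t)"
      using 7[OF t] by (intro mult_right_mono) auto
    finally show "norm (of_nat (card {p\<in>S. g p = t}) * f t) \<le> norm (f t) * real (card (\<Lambda> \<inter> (\<lambda>x. - t + x) ` \<Lambda>))"
      by (simp add: mult.commute)
  qed
  finally show ?thesis .
qed

theorem lemma4p1:
  fixes \<Lambda> :: "'a::{topological_ab_group_add, t2_space, second_countable_topology} set"
    and A :: "nat \<Rightarrow> 'a set"
    and \<mu> :: "'a measure"
  assumes "locally_compact_space (euclidean :: 'a topology)"
    and "haar_measure \<mu>"
    and "finite_local_complexity \<Lambda>"
    and "van_Hove \<mu> A"
    and "filterlim (\<lambda>n. card (\<Lambda> \<inter> A n)) at_top sequentially"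
    and "\<forall>t\<in>set_minus \<Lambda> \<Lambda>. t \<noteq> 0 \<longrightarrow> finite (\<Lambda> \<inter> (\<lambda>x. - t + x) ` \<Lambda>)"
  shows "counting_autocorrelation \<Lambda> A dirac0"
  unfolding counting_autocorrelation_def vague_lim_def
proof
  fix f :: "'a \<Rightarrow> complex" assume "f \<in> Cc"
  then have cK: "compact (closure {x. f x \<noteq> 0})" unfolding Cc_def by auto
  define T where "T = (closure {x. f x \<noteq> 0} \<inter> set_minus \<Lambda> \<Lambda>) - {0}"
  have fT: "finite T" using assms(3) cK unfolding finite_local_complexity_def T_def by auto
  define M where "M = (\<Sum>t\<in>T. norm (f t) * real (card (\<Lambda> \<inter> (\<lambda>x. - t + x) ` \<Lambda>)))"
  have TT: "x - y \<in> T" if "x \<in> \<Lambda>" "y \<in> \<Lambda>" "x \<noteq> y" "f (x - y) \<noteq> 0" for x y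
    using that closure_subset unfolding T_def set_minus_def by fastforce
  have fin: "finite (\<Lambda> \<inter> (\<lambda>x. - t + x) ` \<Lambda>)" if "t \<in> T" for t
    using assms(6) that unfolding T_def by auto
  have ev: "eventually (\<lambda>n. card (\<Lambda> \<inter> A n) \<ge> 1) sequentially"
    using assms(5) by (simp add: filterlim_at_top)
  have bnd: "eventually (\<lambda>n. norm (gamma_fin (\<Lambda> \<inter> A n) f - dirac0 f) \<le> M / real (card (\<Lambda> \<inter> A n))) sequentially"
    using ev
  proof eventually_elim
    case (elim n)
    define F where "F = \<Lambda> \<inter> A n"
    have cF: "card F \<ge> 1" using elim F_def by simp
    have fF: "finite F" using cF by (metis card.infinite not_one_le_zero)
    have ne: "F \<noteq> {}" using cF by auto
    have B: "norm ((\<Sum>x\<in>F. \<Sum>y\<in>F. f (x - y)) - of_nat (card F) * f 0) \<le> M"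
      unfolding M_def by (rule core_bound[OF _ fF fT TT fin]) (auto simp: F_def)
    have "gamma_fin F f - dirac0 f = ((\<Sum>x\<in>F. \<Sum>y\<in>F. f (x - y)) - of_nat (card F) * f 0) / of_nat (card F)"
      using ne cF unfolding gamma_fin_def dirac0_def by (simp add: field_simps)
    then have "norm (gamma_fin F f - dirac0 f) = norm ((\<Sum>x\<in>F. \<Sum>y\<in>F. f (x - y)) - of_nat (card F) * f 0) / real (card F)"
      by (simp add: norm_divide)
    also have "\<dots> \<le> M / real (card F)"
      using B cF by (intro divide_right_mono) auto
    finally show ?case unfolding F_def .
  qed
  have lim: "(\<lambda>n. M / real (card (\<Lambda> \<inter> A n))) \<longlonglongrightarrow> 0"
    by (rule tendsto_divide_0[OF tendsto_const])
       (rule filterlim_at_top_imp_at_infinity[OF filterlim_compose[OF filterlim_real_sequentially assms(5)]])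
  show "(\<lambda>n. gamma_fin (\<Lambda> \<inter> A n) f) \<longlonglongrightarrow> dirac0 f"
    by (rule LIM_zero_cancel, rule Lim_null_comparison[OF bnd lim])
qed

end
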